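(* Let $n\ge1$, $p$ a prime, $R\subset E_n$, and $S\subset E_n$ with $|S|\geq2$. The following are equivalent: (i) $\mathcal{C}_{R,S}=\mathcal{C}_{\mathsf{pHa},S}$; (ii) $\mathcal{C}_{\mathsf{pHa},S}$ is a homogeneous $S$-adapted $p$-cone, i.e. there is $T\subset E_n$ with $\mathcal{C}_{\mathsf{pHa},S}=\{x\in\mathbb{Z}^n:F^{(i)}_T(x)\le0\ \forall i\in S\}$; (iii) for every connected component $C$ of the chain diagram $\Gamma_n(R,S)$, the integers $\#(C\cap R)$ and $\#C$ have different parity.
   Context: $E_n=\{1,\dots,n\}$, indices mod $n$; $e_i$ standard basis of $\mathbb{Z}^n$ ($e_0=e_n$). For $U\subset E_n$, $\delta_U^{(i)}=-1$ if $i\in U$, else $1$. $F^{(d)}_T(x)=\sum_{i=0}^{n-1}p^i\delta_T^{(d+i)}x_{d+i}$. Saturation of a submonoid $A\subset\mathbb{Z}^n$: $\{x:mx\in A\text{ for some }m\ge1\}$. $\mathsf{ha}^{(i)}_{R,S}=-\delta_S^{(i)}e_i-p\delta_R^{(i-1)}e_{i-1}$; $\mathcal{C}_{\mathsf{pHa},S}$ is the saturation of $\sum_{i\in S}\mathbb{N}\mathsf{ha}^{(i)}_{R,S}+\sum_{i\notin S}\mathbb{Z}\mathsf{ha}^{(i)}_{R,S}$. $\mathcal{C}_{R,S}=\{x:F^{(i)}_{T'}(x)\le0\ \forall i\in S\}$ where $T'$ is the unique subset with: for each $i$ with $i+1\notin S$, if $i\notin R$ exactly one of $i,i+1$ is in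 $T'$, and if $i\in R$ both or neither are; and for each $i\in S$, $i-1\in T'\iff i-1\in R$. The chain diagram $\Gamma_n(R,S)$ has vertices $E_n$, with $i$ and $i+1$ joined by an edge exactly when $i+1\notin S$; its connected components are the maximal sets connected by edges, namely the cyclic intervals from an element $s\in S$ to (the next element of $S$ after $s$) minus one. *)

theory Defs
  imports "HOL-Computational_Algebra.Primes"
begin

(* Vectors of Z^n are functions nat => int supported on E_n = {1..n}. *)
definition En :: "nat \<Rightarrow> nat set" where "En n = {1..n}"

definition zvec :: "nat \<Rightarrow> (nat \<Rightarrow> int) set" where
  "zvec n = {x. \<forall>j. j \<notin> En n \<longrightarrow> x j = 0}"

(* cyclic index: representative in {1..n} of k mod n *)
definition cidx :: "nat \<Rightarrow> nat \<Rightarrow> nat" where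
  "cidx n k = (k + n - 1) mod n + 1"

definition csucc :: "nat \<Rightarrow> nat \<Rightarrow> nat" where "csucc n i = cidx n (i + 1)"
definition cpred :: "nat \<Rightarrow> nat \<Rightarrow> nat" where "cpred n i = cidx n (i + n - 1)"

definition evec :: "nat \<Rightarrow> nat \<Rightarrow> nat \<Rightarrow> int" where
  "evec n i = (\<lambda>j. if j = cidx n i then 1 else 0)"

definition delta :: "nat \<Rightarrow> nat set \<Rightarrow> nat \<Rightarrow> int" where
  "delta n U i = (if cidx n i \<in> U then -1 else 1)"

definition F :: "nat \<Rightarrow> nat \<Rightarrow> nat \<Rightarrow> nat set \<Rightarrow> (nat \<Rightarrow> int) \<Rightarrow> int" where
  "F n p d T x = (\<Sum>i<n. int p ^ i * delta n T (d + i) * x (cidx n (d + i)))"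

definition ha :: "nat \<Rightarrow> nat \<Rightarrow> nat set \<Rightarrow> nat set \<Rightarrow> nat \<Rightarrow> nat \<Rightarrow> int" where
  "ha n p R S i = (\<lambda>j. - delta n S i * evec n i j
                        - int p * delta n R (cpred n i) * evec n (cpred n i) j)"

definition saturation :: "nat \<Rightarrow> (nat \<Rightarrow> int) set \<Rightarrow> (nat \<Rightarrow> int) set" where
  "saturation n A = {x \<in> zvec n. \<exists>m::nat. m \<ge> 1 \<and> (\<lambda>j. int m * x j) \<in> A}"

definition pHa_monoid :: "nat \<Rightarrow> nat \<Rightarrow> nat set \<Rightarrow> nat set \<Rightarrow> (nat \<Rightarrow> int) set" where
  "pHa_monoid n p R S = {x. \<exists>c :: nat \<Rightarrow> int. (\<forall>i\<in>S. c i \<ge> 0) \<and>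
       x = (\<lambda>j. \<Sum>i\<in>En n. c i * ha n p R S i j)}"

definition C_pHa :: "nat \<Rightarrow> nat \<Rightarrow> nat set \<Rightarrow> nat set \<Rightarrow> (nat \<Rightarrow> int) set" where
  "C_pHa n p R S = saturation n (pHa_monoid n p R S)"

definition Tprime_cond :: "nat \<Rightarrow> nat set \<Rightarrow> nat set \<Rightarrow> nat set \<Rightarrow> bool" where
  "Tprime_cond n R S T \<longleftrightarrow> T \<subseteq> En n \<and>
     (\<forall>i\<in>En n. csucc n i \<notin> S \<longrightarrow>
         (i \<notin> R \<longrightarrow> (i \<in> T \<longleftrightarrow> csucc n i \<notin> T)) \<and>
         (i \<in> R \<longrightarrow> (i \<in> T \<longleftrightarrow> csucc n i \<in> T))) \<and>
     (\<forall>i\<in>S. cpred n i \<in> T \<longleftrightarrow> cpred n i \<in> R)"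

definition Tprime :: "nat \<Rightarrow> nat set \<Rightarrow> nat set \<Rightarrow> nat set" where
  "Tprime n R S = (THE T. Tprime_cond n R S T)"

definition hom_cone :: "nat \<Rightarrow> nat \<Rightarrow> nat set \<Rightarrow> nat set \<Rightarrow> (nat \<Rightarrow> int) set" where
  "hom_cone n p S T = {x \<in> zvec n. \<forall>i\<in>S. F n p i T x \<le> 0}"

definition C_RS :: "nat \<Rightarrow> nat \<Rightarrow> nat set \<Rightarrow> nat set \<Rightarrow> (nat \<Rightarrow> int) set" where
  "C_RS n p R S = hom_cone n p S (Tprime n R S)"

definition chain_edges :: "nat \<Rightarrow> nat set \<Rightarrow> (nat \<times> nat) set" where
  "chain_edges n S = {(i, csucc n i) | i. i \<in> En n \<and> csucc n i \<notin> S}"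

definition chain_components :: "nat \<Rightarrow> nat set \<Rightarrow> nat set set" where
  "chain_components n S =
     (\<lambda>i. ((chain_edges n S \<union> (chain_edges n S)\<inverse>)\<^sup>*) `` {i}) ` En n"

end

theory Submission
  imports Defs "HOL-Number_Theory.Cong"
begin


locale cyc = fixes n :: nat assumes n1: "1 \<le> n"
begin

lemma cidx_En[simp]: "cidx n k \<in> En n"
proof -
  have "(k + n - 1) mod n < n" using n1 by simp
  then show ?thesis by (simp add: cidx_def En_def)
qed

lemma cidx_id: "k \<in> En n \<Longrightarrow> cidx n k = k"
proof -
  assume "k \<in> En n"
  then have "k - 1 < n" "1 \<le> k" by (auto simp: En_def)
  then have e: "k + n - 1 = (k - 1) + n" by simp
  have "(k + n - 1) mod n = k - 1" unfolding e using \<open>k - 1 < n\<close> by simp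
  then show ?thesis using \<open>1 \<le> k\<close> unfolding cidx_def by simp
qed

lemma cidx_mod: "cidx n a mod n = a mod n"
proof -
  have "cidx n a mod n = ((a + n - 1) mod n + 1) mod n" by (simp add: cidx_def)
  also have "\<dots> = (a + n - 1 + 1) mod n" by (metis mod_add_left_eq)
  also have "a + n - 1 + 1 = a + n" using n1 by simp
  finally show ?thesis by simp
qed

lemma cidx_cong: "a mod n = b mod n \<Longrightarrow> cidx n a = cidx n b"
proof -
  assume h: "a mod n = b mod n"
  have "(a + (n - 1)) mod n = (b + (n - 1)) mod n" by (metis h mod_add_left_eq)
  moreover have "a + n - 1 = a + (n - 1)" "b + n - 1 = b + (n-1)" using n1 by auto
  ultimately show ?thesis by (simp add: cidx_def)
qed

lemma cidx_eq_iff: "cidx n a = cidx n b \<longleftrightarrow> a mod n = b mod n"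
  by (metis cidx_cong cidx_mod)

lemma cidx_eqI: "k \<in> En n \<Longrightarrow> a mod n = k mod n \<Longrightarrow> cidx n a = k"
  by (metis cidx_cong cidx_id)

lemma cidx_idem[simp]: "cidx n (cidx n a) = cidx n a"
  by (simp add: cidx_id)

lemma csucc_En[simp]: "csucc n i \<in> En n" and cpred_En[simp]: "cpred n i \<in> En n"
  by (simp_all add: csucc_def cpred_def)

lemma csucc_cpred[simp]: "i \<in> En n \<Longrightarrow> csucc n (cpred n i) = i"
proof -
  assume i: "i \<in> En n"
  have "(cpred n i + 1) mod n = (i + n - 1 + 1) mod n"
    by (metis cidx_mod cpred_def mod_add_left_eq)
  also have "i + n - 1 + 1 = i + n" using n1 by simp
  finally show ?thesis unfolding csucc_def using i by (intro cidx_eqI) auto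
qed

lemma cpred_csucc[simp]: "i \<in> En n \<Longrightarrow> cpred n (csucc n i) = i"
proof -
  assume i: "i \<in> En n"
  have "(csucc n i + n - 1) mod n = (csucc n i + (n - 1)) mod n" using n1 by simp
  also have "\<dots> = (i + 1 + (n - 1)) mod n"
    by (metis cidx_mod csucc_def mod_add_left_eq)
  also have "i + 1 + (n - 1) = i + n" using n1 by simp
  finally show ?thesis unfolding cpred_def using i by (intro cidx_eqI) auto
qed

lemma delta_cidx[simp]: "delta n U (cidx n i) = delta n U i"
  by (simp add: delta_def)

lemma delta_pm: "delta n U i = 1 \<or> delta n U i = -1"
  by (simp add: delta_def)

lemma delta_sq[simp]: "delta n U i * delta n U i = 1"
  by (simp add: delta_def)

lemma delta_En: "i \<in> En n \<Longrightarrow> delta n U i = (if i \<in> U then -1 else 1)"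
  by (simp add: delta_def cidx_id)

lemma csucc_pow: "i \<in> En n \<Longrightarrow> (csucc n ^^ k) i = cidx n (i + k)"
proof (induction k)
  case 0 then show ?case by (simp add: cidx_id)
next
  case (Suc k)
  have "(csucc n ^^ Suc k) i = csucc n ((csucc n ^^ k) i)" by (simp only: funpow.simps o_apply)
  also have "\<dots> = csucc n (cidx n (i + k))" using Suc.IH Suc.prems by simp
  also have "\<dots> = cidx n (cidx n (i + k) + 1)" by (simp only: csucc_def)
  also have "\<dots> = cidx n (i + Suc k)"
  proof (rule cidx_cong)
    have "(cidx n (i + k) + 1) mod n = (i + k + 1) mod n" by (metis cidx_mod mod_add_left_eq)
    then show "(cidx n (i + k) + 1) mod n = (i + Suc k) mod n" by simp
  qed
  finally show ?case .
qed

lemma csucc_pow_En[simp]: "i \<in> En n \<Longrightarrow> (csucc n ^^ k) i \<in> En n"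
  by (simp add: csucc_pow)

end


definition Phi :: "nat \<Rightarrow> nat \<Rightarrow> nat set \<Rightarrow> nat set \<Rightarrow> (nat \<Rightarrow> int) \<Rightarrow> nat \<Rightarrow> int" where
  "Phi n p R S c = (\<lambda>j. \<Sum>i\<in>En n. c i * ha n p R S i j)"

definition offs :: "nat \<Rightarrow> nat \<Rightarrow> nat \<Rightarrow> nat" where
  "offs n d k = (k + n - d) mod n"

context cyc
begin

lemma En_finite[simp]: "finite (En n)" by (simp add: En_def)

lemma En_le: "d \<in> En n \<Longrightarrow> d \<le> n" and En_ge: "d \<in> En n \<Longrightarrow> 1 \<le> d"
  by (auto simp: En_def)

lemma ha_eval: "i \<in> En n \<Longrightarrow> ha n p R S i j =
   - delta n S i * (if j = i then 1 else 0) - int p * delta n R (cpred n i) * (if j = cpred n i then 1 else 0)"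
  by (simp add: ha_def evec_def cidx_id)

lemma ha_out: "j \<notin> En n \<Longrightarrow> ha n p R S i j = 0"
  using cidx_En[of i] cidx_En[of "cpred n i"] by (auto simp: ha_def evec_def)

lemma Phi_out: "j \<notin> En n \<Longrightarrow> Phi n p R S c j = 0"
  by (simp add: Phi_def ha_out)

lemma Phi_zvec: "Phi n p R S c \<in> zvec n"
  by (simp add: zvec_def Phi_out)

lemma Phi_in: assumes j: "j \<in> En n"
  shows "Phi n p R S c j = - delta n S j * c j - int p * delta n R j * c (csucc n j)"
proof -
  have "Phi n p R S c j = (\<Sum>i\<in>En n. (if i = j then - delta n S j * c j else 0))
       + (\<Sum>i\<in>En n. (if i = csucc n j then - int p * delta n R j * c (csucc n j) else 0))"
    unfolding Phi_def sum.distrib[symmetric]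
  proof (rule sum.cong[OF refl])
    fix i assume i: "i \<in> En n"
    have e: "(j = cpred n i) = (i = csucc n j)" using i j by auto
    show "c i * ha n p R S i j = (if i = j then - delta n S j * c j else 0) +
         (if i = csucc n j then - int p * delta n R j * c (csucc n j) else 0)"
    proof (cases "i = csucc n j")
      case True
      then show ?thesis using i j by (auto simp: ha_eval algebra_simps)
    next
      case False
      then show ?thesis using i j by (auto simp: ha_eval e algebra_simps)
    qed
  qed
  also have "\<dots> = - delta n S j * c j - int p * delta n R j * c (csucc n j)"
    using j by simp
  finally show ?thesis .
qed

lemma Phi_scale: "Phi n p R S (\<lambda>i. m * c i) = (\<lambda>j. m * Phi n p R S c j)"
  by (simp add: Phi_def sum_distrib_left algebra_simps)

lemma F_lin: "F n p d T (Phi n p R S c) = (\<Sum>i\<in>En n. c i * F n p d T (ha n p R S i))"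
  unfolding F_def Phi_def
  by (simp add: sum_distrib_left sum.swap[of _ "En n"] algebra_simps)

lemma F_scale: "F n p d T (\<lambda>j. m * x j) = m * F n p d T x"
  unfolding F_def by (simp add: sum_distrib_left algebra_simps)

lemma offs_lt: "offs n d k < n"
  using n1 by (simp add: offs_def)

lemma cidx_off: assumes d: "d \<in> En n" and k: "k \<in> En n" and t: "t < n"
  shows "(cidx n (d + t) = k) = (t = offs n d k)"
proof -
  have dn: "d \<le> n" using d by (simp add: En_def)
  have "(cidx n (d + t) = k) = ((d + t) mod n = k mod n)"
    using k by (metis cidx_eq_iff cidx_id)
  also have "\<dots> = ((d + t + (n - d)) mod n = (k + (n - d)) mod n)"
    using cong_add_rcancel_nat[of "d+t" "n-d" k n] by (simp add: cong_def)
  also have "d + t + (n - d) = t + n" using dn by simp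
  also have "(t + n) mod n = t" using t by simp
  also have "k + (n - d) = k + n - d" using dn by simp
  finally show ?thesis by (simp add: offs_def)
qed

lemma sum_cidx: assumes d: "d \<in> En n" and k: "k \<in> En n"
  shows "(\<Sum>t<n. (if cidx n (d + t) = k then f t else 0)) = f (offs n d k)"
proof -
  have "(\<Sum>t<n. (if cidx n (d + t) = k then f t else 0)) = (\<Sum>t<n. (if t = offs n d k then f t else 0))"
    using cidx_off[OF d k] by (intro sum.cong) auto
  also have "\<dots> = f (offs n d k)" using offs_lt by simp
  finally show ?thesis .
qed

lemma F_ha: assumes d: "d \<in> En n" and i: "i \<in> En n"
  shows "F n p d T (ha n p R S i) = - delta n S i * int p ^ offs n d i * delta n T i
     - int p * delta n R (cpred n i) * int p ^ offs n d (cpred n i) * delta n T (cpred n i)"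
proof -
  let ?ci = "cpred n i"
  have "F n p d T (ha n p R S i) = (\<Sum>t<n. (if cidx n (d + t) = i then - delta n S i * int p ^ t * delta n T i else 0))
     + (\<Sum>t<n. (if cidx n (d + t) = ?ci then - int p * delta n R ?ci * int p ^ t * delta n T ?ci else 0))"
    unfolding F_def sum.distrib[symmetric]
  proof (rule sum.cong[OF refl])
    fix t
    have e: "delta n T (d + t) = delta n T (cidx n (d + t))" by simp
    show "int p ^ t * delta n T (d + t) * ha n p R S i (cidx n (d + t)) =
      (if cidx n (d + t) = i then - delta n S i * int p ^ t * delta n T i else 0) +
      (if cidx n (d + t) = ?ci then - int p * delta n R ?ci * int p ^ t * delta n T ?ci else 0)"
      unfolding e using i
      by (cases "cidx n (d+t) = i"; cases "cidx n (d+t) = ?ci") (simp_all del: delta_cidx add: ha_eval algebra_simps)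
  qed
  also have "\<dots> = - delta n S i * int p ^ offs n d i * delta n T i
     - int p * delta n R ?ci * int p ^ offs n d ?ci * delta n T ?ci"
    using d i by (simp add: sum_cidx)
  finally show ?thesis .
qed

lemma offs_self: "offs n d d = 0"
  using n1 by (simp add: offs_def)

lemma offs_pred_self: assumes d: "d \<in> En n" shows "offs n d (cpred n d) = n - 1"
proof -
  have dn: "d \<le> n" using d by (simp add: En_def)
  have "offs n d (cpred n d) = (cpred n d + (n - d)) mod n" using dn by (simp add: offs_def)
  also have "\<dots> = (d + n - 1 + (n - d)) mod n"
    by (metis cidx_mod cpred_def mod_add_left_eq)
  also have "d + n - 1 + (n - d) = (n - 1) + n" using dn n1 by simp
  also have "((n - 1) + n) mod n = n - 1" using n1 by (subst mod_add_self2) simp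
  finally show ?thesis .
qed

lemma offs_pred: assumes d: "d \<in> En n" and i: "i \<in> En n" and ne: "i \<noteq> d"
  shows "Suc (offs n d (cpred n i)) = offs n d i"
proof -
  have dn: "d \<le> n" using d by (simp add: En_def)
  define oo where "oo = offs n d i"
  have ooo_def': "oo = (i + (n - d)) mod n" using dn by (simp add: oo_def offs_def)
  have "oo \<noteq> 0"
  proof
    assume "oo = 0"
    then have "(i + (n - d)) mod n = (d + (n - d)) mod n" using dn ooo_def' by simp
    then have "i mod n = d mod n" using cong_add_rcancel_nat[of i "n-d" d n] by (simp add: cong_def)
    then show False using ne d i by (metis cidx_eqI)
  qed
  have "offs n d (cpred n i) = (cpred n i + (n - d)) mod n" using dn by (simp add: offs_def)
  also have "\<dots> = (i + n - 1 + (n - d)) mod n"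
    by (metis cidx_mod cpred_def mod_add_left_eq)
  also have "i + n - 1 + (n - d) = (i + (n - d)) + (n - 1)" using n1 by simp
  also have "((i + (n - d)) + (n - 1)) mod n = (oo + (n - 1)) mod n"
    by (metis ooo_def' mod_add_left_eq)
  also have "oo + (n - 1) = (oo - 1) + n" using \<open>oo \<noteq> 0\<close> n1 by simp
  also have "((oo - 1) + n) mod n = oo - 1" using offs_lt[of d i] oo_def by simp
  finally show ?thesis using \<open>oo \<noteq> 0\<close> oo_def by simp
qed

end


locale sset = cyc + fixes p :: nat and R S :: "nat set"
  assumes p2: "2 \<le> p" and SEn: "S \<subseteq> En n" and cardS: "2 \<le> card S"
begin

lemma S_fin: "finite S" using cardS by (metis card.infinite not_numeral_le_zero)

lemma S_other: "\<exists>d\<in>S. d \<noteq> i"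
proof (rule ccontr)
  assume "\<not> ?thesis"
  then have "S \<subseteq> {i}" by auto
  then have "card S \<le> card {i}" by (intro card_mono) auto
  then have "card S \<le> 1" by simp
  then show False using cardS by simp
qed

lemma abs_delta[simp]: "\<bar>delta n U i\<bar> = 1" by (simp add: delta_def)

lemma Phi_diff: "Phi n p R S (\<lambda>i. a i - b i) j = Phi n p R S a j - Phi n p R S b j"
  by (simp add: Phi_def sum_subtractf algebra_simps)

lemma Phi_inj0: assumes h: "\<forall>j\<in>En n. Phi n p R S c j = 0" shows "\<forall>j\<in>En n. c j = 0"
proof -
  define M where "M = Max ((\<lambda>j. \<bar>c j\<bar>) ` En n)"
  have ne: "En n \<noteq> {}" using n1 by (auto simp: En_def)
  have "M \<in> (\<lambda>j. \<bar>c j\<bar>) ` En n" unfolding M_def by (rule Max_in) (auto simp: ne)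
  then obtain j0 where j0: "j0 \<in> En n" "\<bar>c j0\<bar> = M" by auto
  have le: "\<And>j. j \<in> En n \<Longrightarrow> \<bar>c j\<bar> \<le> M" unfolding M_def by simp
  define j1 where "j1 = cpred n j0"
  have j1: "j1 \<in> En n" "csucc n j1 = j0" using j0 by (auto simp: j1_def)
  have "- delta n S j1 * c j1 - int p * delta n R j1 * c j0 = 0"
    using h j1 Phi_in[where j=j1 and c=c and p=p and R=R and S=S] by simp
  then have "delta n S j1 * c j1 = - (int p * delta n R j1 * c j0)" by simp
  then have "\<bar>delta n S j1 * c j1\<bar> = \<bar>int p * delta n R j1 * c j0\<bar>" by simp
  then have "\<bar>c j1\<bar> = int p * M" using j0 by (simp add: abs_mult)
  with le[OF j1(1)] have "int p * M \<le> M" by simp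
  moreover have "0 \<le> M" using j0 by auto
  moreover have "2 * M \<le> int p * M" using p2 \<open>0 \<le> M\<close> by (intro mult_right_mono) auto
  ultimately have "M = 0" by linarith
  then show ?thesis using le by fastforce
qed

lemma Phi_inj: assumes "\<forall>j\<in>En n. Phi n p R S a j = Phi n p R S b j" and "j \<in> En n"
  shows "a j = b j"
  using Phi_inj0[of "\<lambda>i. a i - b i"] assms by (simp add: Phi_diff)

fun gg :: "(nat \<Rightarrow> int) \<Rightarrow> int \<Rightarrow> int \<Rightarrow> nat \<Rightarrow> int" where
  "gg x m A 0 = A"
| "gg x m A (Suc t) = - delta n S (n - t) * (m * x (n - t) + int p * delta n R (n - t) * gg x m A t)"

lemma gg_lin: "gg x m A t = m * gg x 1 0 t + A * gg x 0 1 t"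
  by (induction t) (simp_all add: algebra_simps)

lemma gg_abs: "\<bar>gg x 0 1 t\<bar> = int p ^ t"
  by (induction t) (simp_all add: abs_mult)

lemma Phi_surj: assumes x: "x \<in> zvec n"
  shows "\<exists>m::nat. 1 \<le> m \<and> (\<exists>c. Phi n p R S c = (\<lambda>j. int m * x j))"
proof -
  define \<alpha> where "\<alpha> = gg x 1 0 n"
  define \<beta> where "\<beta> = gg x 0 1 n"
  have "\<bar>\<beta>\<bar> = int p ^ n" by (simp add: \<beta>_def gg_abs)
  moreover have "int p ^ 1 \<le> int p ^ n" using p2 n1 by (intro power_increasing) auto
  moreover have "2 \<le> int p" using p2 by simp
  ultimately have "\<bar>\<beta>\<bar> \<ge> 2" by (metis order_trans power_one_right)
  then have b1: "1 - \<beta> \<noteq> 0" by auto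
  define mi where "mi = (1 - \<beta>)^2"
  define A where "A = \<alpha> * (1 - \<beta>)"
  have "0 < mi" using b1 unfolding mi_def by simp
  then have mi: "1 \<le> mi" by linarith
  have gA: "gg x mi A n = A"
    using gg_lin[of x mi A n] unfolding mi_def A_def \<alpha>_def[symmetric] \<beta>_def[symmetric]
    by (simp add: power2_eq_square algebra_simps)
  define c where "c = (\<lambda>j. gg x mi A (n + 1 - j))"
  have "Phi n p R S c = (\<lambda>j. mi * x j)"
  proof
    fix j
    show "Phi n p R S c j = mi * x j"
    proof (cases "j \<in> En n")
      case False
      then show ?thesis using x Phi_out by (simp add: zvec_def)
    next
      case True
      then have j: "1 \<le> j" "j \<le> n" by (auto simp: En_def)
      have cj: "c j = - delta n S j * (mi * x j + int p * delta n R j * gg x mi A (n - j))"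
        unfolding c_def using j by (simp add: Suc_diff_le)
      have cs: "c (csucc n j) = gg x mi A (n - j)"
      proof (cases "j < n")
        case True
        then have "csucc n j = j + 1" unfolding csucc_def using j by (intro cidx_id) (auto simp: En_def)
        then show ?thesis using True by (simp add: c_def)
      next
        case False
        then have jn: "j = n" using j by simp
        have "csucc n j = 1" unfolding csucc_def jn
          using n1 by (intro cidx_eqI) (auto simp: En_def mod_Suc)
        then show ?thesis using jn gA by (simp add: c_def)
      qed
      have DD: "delta n S j * delta n S j = 1" by simp
      have "- delta n S j * c j = delta n S j * delta n S j * (mi * x j + int p * delta n R j * gg x mi A (n - j))"
        unfolding cj by (simp add: algebra_simps)
      also have "\<dots> = mi * x j + int p * delta n R j * gg x mi A (n - j)" unfolding DD by simp
      finally show ?thesis using True Phi_in[where j=j and c=c and p=p and R=R and S=S] cs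
        by simp
    qed
  qed
  then show ?thesis using mi by (intro exI[of _ "nat mi"]) auto
qed

end


definition Good :: "nat \<Rightarrow> nat set \<Rightarrow> nat set \<Rightarrow> nat set \<Rightarrow> bool" where
  "Good n R S T \<longleftrightarrow>
    (\<forall>i\<in>En n. delta n S i * delta n T i * delta n T (cpred n i) * delta n R (cpred n i) = -1) \<and>
    (\<forall>d\<in>S. delta n T (cpred n d) = delta n R (cpred n d))"

context sset
begin

abbreviation "w T d i \<equiv> F n p d T (ha n p R S i)"

lemma w_off: assumes d: "d \<in> En n" and i: "i \<in> En n" and ne: "i \<noteq> d"
  shows "w T d i = - (int p ^ offs n d i) *
     (delta n S i * delta n T i + delta n R (cpred n i) * delta n T (cpred n i))"
proof -
  have "int p ^ offs n d i = int p * int p ^ offs n d (cpred n i)"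
    using offs_pred[OF d i ne] by (metis power_Suc)
  then show ?thesis using F_ha[OF d i, of p T R S] by (simp add: algebra_simps)
qed

lemma w_diag: assumes d: "d \<in> En n"
  shows "w T d d = - delta n S d * delta n T d - int p ^ n * (delta n R (cpred n d) * delta n T (cpred n d))"
proof -
  have e: "int p ^ n = int p * int p ^ (n - 1)" using n1 by (metis Suc_diff_le diff_Suc_1 power_Suc)
  show ?thesis unfolding e using F_ha[OF d d, of p T R S] offs_self[of d] offs_pred_self[OF d]
    by (simp add: algebra_simps)
qed

lemma pn2: "2 \<le> int p ^ n"
proof -
  have "int p ^ 1 \<le> int p ^ n" using p2 n1 by (intro power_increasing) auto
  moreover have "2 \<le> int p" using p2 by simp
  ultimately show ?thesis by (metis order_trans power_one_right)
qed

lemma w_diag_ne: assumes d: "d \<in> En n" shows "w T d d \<noteq> 0"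
proof -
  have a: "\<bar>delta n S d * delta n T d\<bar> = 1" by (simp add: abs_mult)
  have b: "\<bar>int p ^ n * (delta n R (cpred n d) * delta n T (cpred n d))\<bar> = int p ^ n"
    by (simp add: abs_mult)
  show ?thesis using w_diag[OF d, of T] a b pn2 by linarith
qed

lemma K1: "(\<forall>i\<in>S. 0 \<le> c i) \<Longrightarrow> Phi n p R S c \<in> C_pHa n p R S"
  unfolding C_pHa_def saturation_def pHa_monoid_def
  by (auto simp: Phi_zvec intro!: exI[of _ 1] exI[of _ c]) (simp add: Phi_def)

lemma K2: assumes "Phi n p R S c \<in> C_pHa n p R S" and i: "i \<in> S" shows "0 \<le> c i"
proof -
  obtain m :: nat and c' where m: "1 \<le> m" and c': "\<forall>i\<in>S. 0 \<le> c' i"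
    and e: "(\<lambda>j. int m * Phi n p R S c j) = Phi n p R S c'"
    using assms(1) unfolding C_pHa_def saturation_def pHa_monoid_def Phi_def by auto
  have "Phi n p R S (\<lambda>i. int m * c i) = Phi n p R S c'" using e by (simp add: Phi_scale)
  then have "int m * c i = c' i" using Phi_inj[of "\<lambda>i. int m * c i" c' i] i SEn by auto
  then have "0 \<le> int m * c i" using c' i by simp
  then show ?thesis using m by (simp add: zero_le_mult_iff)
qed

lemma hom_Phi: "Phi n p R S c \<in> hom_cone n p S T \<longleftrightarrow> (\<forall>d\<in>S. (\<Sum>i\<in>En n. c i * w T d i) \<le> 0)"
  unfolding hom_cone_def by (simp add: Phi_zvec F_lin)

lemma cone_good: assumes G: "Good n R S T" shows "hom_cone n p S T = C_pHa n p R S"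
proof -
  have off0: "w T d i = 0" if "d \<in> S" "i \<in> En n" "i \<noteq> d" for d i
  proof -
    have d: "d \<in> En n" using that SEn by auto
    have "delta n S i * delta n T i * delta n T (cpred n i) * delta n R (cpred n i) = -1"
      using G that by (auto simp: Good_def)
    then have "delta n S i * delta n T i + delta n R (cpred n i) * delta n T (cpred n i) = 0"
      using delta_pm[of S i] delta_pm[of T i] delta_pm[of T "cpred n i"] delta_pm[of R "cpred n i"]
      by auto
    then show ?thesis using w_off[OF d that(2,3)] by simp
  qed
  have neg: "w T d d < 0" if "d \<in> S" for d
  proof -
    have d: "d \<in> En n" using that SEn by auto
    have "delta n R (cpred n d) * delta n T (cpred n d) = 1" using G that by (auto simp: Good_def)
    moreover have "delta n S d * delta n T d \<ge> -1"
      using delta_pm[of S d] delta_pm[of T d] by auto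
    ultimately show ?thesis using w_diag[OF d, of T] pn2 by simp
  qed
  have Fsum: "(\<Sum>i\<in>En n. c i * w T d i) = c d * w T d d" if "d \<in> S" for d c
  proof -
    have "(\<Sum>i\<in>En n. c i * w T d i) = (\<Sum>i\<in>En n. if i = d then c d * w T d d else 0)"
      using off0[OF that] by (intro sum.cong) auto
    also have "\<dots> = c d * w T d d" using that SEn by auto
    finally show ?thesis .
  qed
  show ?thesis
  proof (intro set_eqI iffI)
    fix x assume x: "x \<in> hom_cone n p S T"
    then have xz: "x \<in> zvec n" and xF: "\<forall>d\<in>S. F n p d T x \<le> 0" by (auto simp: hom_cone_def)
    obtain m :: nat and c where m: "1 \<le> m" and c: "Phi n p R S c = (\<lambda>j. int m * x j)"
      using Phi_surj[OF xz] by auto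
    have "0 \<le> c d" if d: "d \<in> S" for d
    proof -
      have "c d * w T d d = int m * F n p d T x"
        using Fsum[OF d, of c] F_lin[of p d T R S c] c F_scale[of p d T "int m" x] by simp
      also have "\<dots> \<le> 0" using xF d m by (simp add: mult_nonneg_nonpos)
      finally show ?thesis using neg[OF d] by (simp add: mult_le_0_iff)
    qed
    then have "(\<lambda>j. int m * x j) \<in> pHa_monoid n p R S"
      unfolding pHa_monoid_def using c[symmetric] by (auto simp: Phi_def)
    then show "x \<in> C_pHa n p R S" using xz m unfolding C_pHa_def saturation_def by auto
  next
    fix x assume x: "x \<in> C_pHa n p R S"
    then obtain m :: nat and c where xz: "x \<in> zvec n" and m: "1 \<le> m" and c0: "\<forall>i\<in>S. 0 \<le> c i"
      and c: "(\<lambda>j. int m * x j) = Phi n p R S c"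
      unfolding C_pHa_def saturation_def pHa_monoid_def Phi_def by auto
    have "F n p d T x \<le> 0" if d: "d \<in> S" for d
    proof -
      have "int m * F n p d T x = c d * w T d d"
        using Fsum[OF d, of c] F_lin[of p d T R S c] c F_scale[of p d T "int m" x] by simp
      also have "\<dots> \<le> 0" using neg[OF d] c0 d by (simp add: mult_nonneg_nonpos)
      finally show ?thesis using m by (simp add: mult_le_0_iff)
    qed
    then show "x \<in> hom_cone n p S T" using xz by (simp add: hom_cone_def)
  qed
qed

end


context sset
begin

lemma good_cone: assumes H: "hom_cone n p S T = C_pHa n p R S" shows "Good n R S T"
proof -
  have HK: "(\<forall>d\<in>S. (\<Sum>i\<in>En n. c i * w T d i) \<le> 0) \<longleftrightarrow> (\<forall>i\<in>S. 0 \<le> c i)" for c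
    using hom_Phi[of c T] H K1[of c] K2[of c] by auto
  define ev where "ev (i::nat) s = (\<lambda>k::nat. if k = i then s else (0::int))" for i s
  have ev_sum: "(\<Sum>k\<in>En n. ev i s k * w T d k) = s * w T d i" if "i \<in> En n" for i s d
  proof -
    have "(\<Sum>k\<in>En n. ev i s k * w T d k) = (\<Sum>k\<in>En n. if k = i then s * w T d i else 0)"
      by (intro sum.cong) (auto simp: ev_def)
    then show ?thesis using that by simp
  qed
  have wa: "w T d i = 0" if d: "d \<in> S" and i: "i \<in> En n" "i \<notin> S" for d i
  proof -
    have "\<forall>k\<in>S. 0 \<le> ev i 1 k" "\<forall>k\<in>S. 0 \<le> ev i (-1) k" using i by (auto simp: ev_def)
    then have "\<forall>d\<in>S. (\<Sum>k\<in>En n. ev i 1 k * w T d k) \<le> 0" "\<forall>d\<in>S. (\<Sum>k\<in>En n. ev i (-1) k * w T d k) \<le> 0"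
      using HK by blast+
    then show ?thesis using d ev_sum[OF i(1)] by force
  qed
  have wb: "w T d i \<le> 0" if d: "d \<in> S" and i: "i \<in> S" for d i
  proof -
    have i': "i \<in> En n" using i SEn by auto
    have "\<forall>k\<in>S. 0 \<le> ev i 1 k" by (auto simp: ev_def)
    then have "\<forall>d\<in>S. (\<Sum>k\<in>En n. ev i 1 k * w T d k) \<le> 0" using HK by blast
    then show ?thesis using d ev_sum[OF i'] by force
  qed
  have wneg: "w T e e \<le> -1" if e: "e \<in> S" for e
  proof -
    have "e \<in> En n" using e SEn by auto
    then show ?thesis using wb[OF e e] w_diag_ne[of e T] by linarith
  qed
  define K where "K = (\<Sum>e\<in>En n. \<Sum>i\<in>En n. \<bar>w T e i\<bar>)"
  have Kb: "\<bar>w T e i\<bar> \<le> K" if "e \<in> En n" "i \<in> En n" for e i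
  proof -
    have "\<bar>w T e i\<bar> \<le> (\<Sum>i\<in>En n. \<bar>w T e i\<bar>)" using that by (intro member_le_sum) auto
    also have "\<dots> \<le> K" unfolding K_def using that
      by (intro member_le_sum[of e "En n" "\<lambda>e. \<Sum>i\<in>En n. \<bar>w T e i\<bar>"]) (auto intro: sum_nonneg)
    finally show ?thesis .
  qed
  have wc: "w T d j = 0" if d: "d \<in> S" and j: "j \<in> S" and ne: "j \<noteq> d" for d j
  proof (rule ccontr)
    assume "w T d j \<noteq> 0"
    then have wj: "w T d j \<le> -1" using wb[OF d j] by linarith
    define c where "c = (\<lambda>k. if k = d then -1 else if k \<in> S then K + 1 else (0::int))"
    have "\<forall>e\<in>S. (\<Sum>k\<in>En n. c k * w T e k) \<le> 0"
    proof
      fix e assume e: "e \<in> S"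
      have eE: "e \<in> En n" and dE: "d \<in> En n" using e d SEn by auto
      have "(\<Sum>k\<in>En n. c k * w T e k) = (\<Sum>k\<in>S. c k * w T e k)"
        using SEn d by (intro sum.mono_neutral_right) (auto simp: c_def)
      also have "\<dots> = c d * w T e d + (\<Sum>k\<in>S-{d}. c k * w T e k)"
        using d S_fin by (simp add: sum.remove)
      also have "(\<Sum>k\<in>S-{d}. c k * w T e k) = (K + 1) * (\<Sum>k\<in>S-{d}. w T e k)"
        by (simp add: sum_distrib_left c_def)
      finally have eq: "(\<Sum>k\<in>En n. c k * w T e k) = - w T e d + (K + 1) * (\<Sum>k\<in>S-{d}. w T e k)"
        by (simp add: c_def)
      define q where "q = (if e = d then j else e)"
      have q: "q \<in> S - {d}" "w T e q \<le> -1"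
        using j ne e wj wneg[OF e] by (auto simp: q_def)
      have "(\<Sum>k\<in>S-{d}. w T e k) = w T e q + (\<Sum>k\<in>S-{d}-{q}. w T e k)"
        using q(1) S_fin by (simp add: sum.remove)
      also have "(\<Sum>k\<in>S-{d}-{q}. w T e k) \<le> 0"
        using wb[OF e] by (intro sum_nonpos) auto
      finally have "(\<Sum>k\<in>S-{d}. w T e k) \<le> -1" using q(2) by linarith
      moreover have "0 \<le> K" unfolding K_def by (intro sum_nonneg) auto
      ultimately have "(K + 1) * (\<Sum>k\<in>S-{d}. w T e k) \<le> (K + 1) * (-1)"
        by (intro mult_left_mono) auto
      then have "(K + 1) * (\<Sum>k\<in>S-{d}. w T e k) \<le> - (K + 1)" by simp
      moreover have "- w T e d \<le> K" using Kb[OF eE dE] by linarith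
      ultimately show "(\<Sum>k\<in>En n. c k * w T e k) \<le> 0" unfolding eq by linarith
    qed
    then have "\<forall>i\<in>S. 0 \<le> c i" using HK by blast
    then show False using d by (auto simp: c_def)
  qed
  have part1: "delta n S i * delta n T i * delta n T (cpred n i) * delta n R (cpred n i) = -1"
    if i: "i \<in> En n" for i
  proof -
    obtain d where d: "d \<in> S" "d \<noteq> i" using S_other[of i] by auto
    have dE: "d \<in> En n" using d SEn by auto
    have "w T d i = 0" using wa[OF d(1) i] wc[OF d(1) _ d(2)[symmetric]] by blast
    then have "delta n S i * delta n T i + delta n R (cpred n i) * delta n T (cpred n i) = 0"
      using w_off[OF dE i d(2)[symmetric], of T] p2 by simp
    then show ?thesis
      using delta_pm[of S i] delta_pm[of T i] delta_pm[of T "cpred n i"] delta_pm[of R "cpred n i"]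
      by auto
  qed
  have part2: "delta n T (cpred n d) = delta n R (cpred n d)" if d: "d \<in> S" for d
  proof (rule ccontr)
    assume ne: "delta n T (cpred n d) \<noteq> delta n R (cpred n d)"
    have dE: "d \<in> En n" using d SEn by auto
    have "delta n R (cpred n d) * delta n T (cpred n d) = -1"
      using ne delta_pm[of T "cpred n d"] delta_pm[of R "cpred n d"] by auto
    moreover have "delta n S d * delta n T d \<le> 1"
      using delta_pm[of S d] delta_pm[of T d] by auto
    ultimately have "w T d d > 0" using w_diag[OF dE, of T] pn2 by simp
    then show False using wneg[OF d] by simp
  qed
  show ?thesis using part1 part2 by (simp add: Good_def)
qed

end


definition dst :: "nat \<Rightarrow> nat set \<Rightarrow> nat \<Rightarrow> nat" where
  "dst n S i = (LEAST m. (csucc n ^^ Suc m) i \<in> S)"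

definition pif :: "nat \<Rightarrow> nat set \<Rightarrow> nat set \<Rightarrow> nat \<Rightarrow> int" where
  "pif n R S i = (\<Prod>k\<in>{..dst n S i}. - delta n R ((csucc n ^^ k) i))"

context sset
begin

lemma S_ne: "S \<noteq> {}" using cardS by auto

lemma dst_ex: assumes i: "i \<in> En n" shows "\<exists>m<n. (csucc n ^^ Suc m) i \<in> S"
proof -
  obtain s where s: "s \<in> S" using S_ne by auto
  have sE: "1 \<le> s" "s \<le> n" using s SEn by (auto simp: En_def)
  have iE: "1 \<le> i" "i \<le> n" using i by (auto simp: En_def)
  define m where "m = (s + n - i - 1) mod n"
  have "m < n" using n1 by (simp add: m_def)
  have "(i + Suc m) mod n = (i + 1 + (s + n - i - 1)) mod n"
    unfolding m_def by (metis add_Suc_right add.assoc plus_1_eq_Suc mod_add_right_eq)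
  also have "i + 1 + (s + n - i - 1) = s + n" using sE iE by simp
  finally have "(i + Suc m) mod n = s mod n" by simp
  moreover have "s \<in> En n" using s SEn by auto
  ultimately have "(csucc n ^^ Suc m) i = s" using csucc_pow[OF i, of "Suc m"] cidx_eqI by simp
  then show ?thesis using \<open>m < n\<close> s by auto
qed

lemma dst_S: "i \<in> En n \<Longrightarrow> (csucc n ^^ Suc (dst n S i)) i \<in> S"
  unfolding dst_def using dst_ex by (metis (mono_tags, lifting) LeastI_ex)

lemma dst_lt: "i \<in> En n \<Longrightarrow> dst n S i < n"
proof -
  assume i: "i \<in> En n"
  then obtain m where "m < n" "(csucc n ^^ Suc m) i \<in> S" using dst_ex by blast
  then show ?thesis unfolding dst_def by (meson Least_le le_less_trans)
qed

lemma dst_min: "k < dst n S i \<Longrightarrow> (csucc n ^^ Suc k) i \<notin> S"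
  unfolding dst_def by (rule not_less_Least)

lemma dst0: "csucc n i \<in> S \<Longrightarrow> dst n S i = 0"
  unfolding dst_def by simp

lemma funpow_Suc': "(csucc n ^^ Suc k) i = (csucc n ^^ k) (csucc n i)"
  by (simp add: funpow_Suc_right del: funpow.simps)

lemma dstS: assumes i: "i \<in> En n" and ns: "csucc n i \<notin> S"
  shows "dst n S i = Suc (dst n S (csucc n i))"
proof -
  have "dst n S i = Suc (LEAST m. (csucc n ^^ Suc (Suc m)) i \<in> S)"
    unfolding dst_def
    by (rule Least_Suc[of _ "dst n S i"]) (use dst_S[OF i] ns in \<open>auto simp: dst_def\<close>)
  also have "(LEAST m. (csucc n ^^ Suc (Suc m)) i \<in> S) = dst n S (csucc n i)"
    unfolding dst_def by (simp only: funpow_Suc'[of "Suc _" i])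
  finally show ?thesis .
qed

lemma pif0: "csucc n i \<in> S \<Longrightarrow> pif n R S i = - delta n R i"
  by (simp add: pif_def dst0)

lemma pifS: assumes i: "i \<in> En n" and ns: "csucc n i \<notin> S"
  shows "pif n R S i = - delta n R i * pif n R S (csucc n i)"
proof -
  have "pif n R S i = (\<Prod>k\<in>{..Suc (dst n S (csucc n i))}. - delta n R ((csucc n ^^ k) i))"
    unfolding pif_def dstS[OF i ns] ..
  also have "\<dots> = - delta n R i * (\<Prod>k\<in>{..dst n S (csucc n i)}. - delta n R ((csucc n ^^ Suc k) i))"
    by (subst prod.atMost_Suc_shift) simp
  also have "(\<Prod>k\<in>{..dst n S (csucc n i)}. - delta n R ((csucc n ^^ Suc k) i)) = pif n R S (csucc n i)"
    unfolding pif_def by (simp only: funpow_Suc')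
  finally show ?thesis .
qed

lemma pif_pm: "pif n R S i = 1 \<or> pif n R S i = -1"
proof -
  have "\<bar>pif n R S i\<bar> = 1" unfolding pif_def by (simp add: abs_prod)
  then show ?thesis by auto
qed

lemma tau_pif: assumes h1: "\<forall>i\<in>En n. csucc n i \<notin> S \<longrightarrow> tau i = - delta n R i * tau (csucc n i)"
  and h2: "\<forall>s\<in>S. tau (cpred n s) = delta n R (cpred n s)"
  and i: "i \<in> En n"
  shows "tau i = - pif n R S i"
  using i
proof (induction "dst n S i" arbitrary: i rule: less_induct)
  case less
  show ?case
  proof (cases "csucc n i \<in> S")
    case True
    then have "tau i = delta n R i" using h2 less.prems by (metis cpred_csucc)
    then show ?thesis using pif0[OF True] by simp
  next
    case False
    have "tau (csucc n i) = - pif n R S (csucc n i)"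
      using less.hyps[of "csucc n i"] dstS[OF less.prems False] by simp
    then show ?thesis using h1 less.prems False pifS[OF less.prems False] by simp
  qed
qed

lemma good_hyps: assumes G: "Good n R S T"
  shows "\<forall>i\<in>En n. csucc n i \<notin> S \<longrightarrow> delta n T i = - delta n R i * delta n T (csucc n i)"
    and "\<forall>s\<in>S. delta n T (cpred n s) = delta n R (cpred n s)"
proof -
  show "\<forall>s\<in>S. delta n T (cpred n s) = delta n R (cpred n s)" using G by (simp add: Good_def)
  show "\<forall>i\<in>En n. csucc n i \<notin> S \<longrightarrow> delta n T i = - delta n R i * delta n T (csucc n i)"
  proof (intro ballI impI)
    fix i assume i: "i \<in> En n" and ns: "csucc n i \<notin> S"
    have "delta n S (csucc n i) * delta n T (csucc n i) * delta n T i * delta n R i = -1"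
      using G i by (auto simp: Good_def dest!: bspec[of _ _ "csucc n i"])
    moreover have "delta n S (csucc n i) = 1" using ns by (simp add: delta_En)
    ultimately show "delta n T i = - delta n R i * delta n T (csucc n i)"
      using delta_pm[of T i] delta_pm[of T "csucc n i"] delta_pm[of R i] by auto
  qed
qed

lemma good_pif: assumes G: "Good n R S T" and s: "s \<in> S" shows "pif n R S s = -1"
proof -
  have sE: "s \<in> En n" using s SEn by auto
  have "delta n T s = - pif n R S s" using tau_pif[OF good_hyps[OF G] sE] .
  moreover have "delta n S s * delta n T s * delta n T (cpred n s) * delta n R (cpred n s) = -1"
    using G sE by (simp add: Good_def)
  moreover have "delta n S s = -1" using s sE by (simp add: delta_En)
  moreover have "delta n T (cpred n s) = delta n R (cpred n s)" using G s by (simp add: Good_def)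
  ultimately show ?thesis by (simp add: mult.assoc)
qed

definition "Tpi = {i \<in> En n. pif n R S i = 1}"

lemma delta_Tpi: "i \<in> En n \<Longrightarrow> delta n Tpi i = - pif n R S i"
  using pif_pm[of i] by (auto simp: delta_En Tpi_def)

lemma pif_good: assumes P: "\<forall>s\<in>S. pif n R S s = -1" shows "Good n R S Tpi"
  unfolding Good_def
proof (intro conjI ballI)
  fix d assume d: "d \<in> S"
  then have "csucc n (cpred n d) \<in> S" using SEn by auto
  then show "delta n Tpi (cpred n d) = delta n R (cpred n d)"
    using delta_Tpi[of "cpred n d"] pif0 by simp
next
  fix i assume i: "i \<in> En n"
  define j where "j = cpred n i"
  have j: "j \<in> En n" "csucc n j = i" using i by (auto simp: j_def)
  show "delta n S i * delta n Tpi i * delta n Tpi (cpred n i) * delta n R (cpred n i) = -1"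
  proof (cases "i \<in> S")
    case True
    then show ?thesis using P pif0[of j] j i delta_Tpi[of i] delta_Tpi[of j]
      by (simp add: delta_En j_def)
  next
    case False
    have "pif n R S j = - delta n R j * pif n R S i" using pifS[of j] j False by simp
    then show ?thesis using False j i delta_Tpi[of i] delta_Tpi[of j] pif_pm[of i]
      by (auto simp: delta_En j_def[symmetric])
  qed
qed

lemma Tpi_sub: "Tpi \<subseteq> En n" by (auto simp: Tpi_def)

lemma cond_hyps: assumes C: "Tprime_cond n R S T"
  shows "\<forall>i\<in>En n. csucc n i \<notin> S \<longrightarrow> delta n T i = - delta n R i * delta n T (csucc n i)"
    and "\<forall>s\<in>S. delta n T (cpred n s) = delta n R (cpred n s)"
proof -
  show "\<forall>s\<in>S. delta n T (cpred n s) = delta n R (cpred n s)"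
    using C by (auto simp: Tprime_cond_def delta_En)
  show "\<forall>i\<in>En n. csucc n i \<notin> S \<longrightarrow> delta n T i = - delta n R i * delta n T (csucc n i)"
    using C by (auto simp: Tprime_cond_def delta_En)
qed

lemma cond_unique: assumes "Tprime_cond n R S T1" "Tprime_cond n R S T2" shows "T1 = T2"
proof -
  have sub: "T1 \<subseteq> En n" "T2 \<subseteq> En n" using assms by (auto simp: Tprime_cond_def)
  have "delta n T1 i = delta n T2 i" if "i \<in> En n" for i
    using tau_pif[OF cond_hyps[OF assms(1)] that] tau_pif[OF cond_hyps[OF assms(2)] that] by simp
  then have "i \<in> T1 \<longleftrightarrow> i \<in> T2" if "i \<in> En n" for i
    using that delta_En[where i=i and U=T1] delta_En[where i=i and U=T2] by (auto split: if_splits)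
  then show ?thesis using sub by blast
qed

lemma good_cond: assumes G: "Good n R S T" and T: "T \<subseteq> En n" shows "Tprime_cond n R S T"
proof -
  note h = good_hyps[OF G]
  show ?thesis unfolding Tprime_cond_def
  proof (intro conjI ballI impI T)
    fix i assume i: "i \<in> S"
    then have "delta n T (cpred n i) = delta n R (cpred n i)" using h(2) by blast
    then show "(cpred n i \<in> T) = (cpred n i \<in> R)"
      using delta_En[where i="cpred n i" and U=T] delta_En[where i="cpred n i" and U=R] by (auto split: if_splits)
  next
    fix i assume i: "i \<in> En n" and ns: "csucc n i \<notin> S"
    have e: "delta n T i = - delta n R i * delta n T (csucc n i)" using h(1) i ns by blast
    { assume "i \<notin> R" then show "(i \<in> T) = (csucc n i \<notin> T)" using e i by (auto simp: delta_En split: if_splits) }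
    { assume "i \<in> R" then show "(i \<in> T) = (csucc n i \<in> T)" using e i by (auto simp: delta_En split: if_splits) }
  qed
qed

end


context sset
begin

abbreviation "Rel \<equiv> (chain_edges n S \<union> (chain_edges n S)\<inverse>)\<^sup>*"

lemma edgeI: "i \<in> En n \<Longrightarrow> csucc n i \<notin> S \<Longrightarrow> (i, csucc n i) \<in> chain_edges n S"
  by (auto simp: chain_edges_def)

lemma comp_fwd: assumes s: "s \<in> S"
  shows "Rel `` {s} = (\<lambda>k. (csucc n ^^ k) s) ` {..dst n S s}"
proof -
  have sE: "s \<in> En n" using s SEn by auto
  have fw: "(s, (csucc n ^^ k) s) \<in> Rel" if "k \<le> dst n S s" for k
    using that
  proof (induction k)
    case 0 then show ?case by simp
  next
    case (Suc k)
    have "((csucc n ^^ k) s, csucc n ((csucc n ^^ k) s)) \<in> chain_edges n S"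
      using dst_min[of k s] Suc.prems sE by (intro edgeI) auto
    then show ?case using Suc by (auto intro: rtrancl_into_rtrancl)
  qed
  have bw: "y \<in> (\<lambda>k. (csucc n ^^ k) s) ` {..dst n S s}" if "(s, y) \<in> Rel" for y
    using that
  proof (induction rule: rtrancl_induct)
    case base then show ?case by (auto intro: image_eqI[of _ _ 0])
  next
    case (step y z)
    then obtain k where k: "k \<le> dst n S s" "y = (csucc n ^^ k) s" by auto
    from step(2) show ?case
    proof
      assume "(y, z) \<in> chain_edges n S"
      then have z: "z = csucc n y" "z \<notin> S" by (auto simp: chain_edges_def)
      have "k \<noteq> dst n S s" using z k dst_S[OF sE] by auto
      then show ?thesis using z k by (auto intro!: image_eqI[of _ _ "Suc k"])
    next
      assume "(y, z) \<in> (chain_edges n S)\<inverse>"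
      then have z: "y = csucc n z" "y \<notin> S" "z \<in> En n" by (auto simp: chain_edges_def)
      have "k \<noteq> 0"
      proof
        assume "k = 0" then have "y = s" using k by simp
        then show False using z s by simp
      qed
      then obtain k' where k': "k = Suc k'" by (cases k) auto
      have "z = cpred n y" using z by simp
      also have "\<dots> = (csucc n ^^ k') s" using k k' sE by simp
      finally show ?thesis using k k' by auto
    qed
  qed
  show ?thesis using fw bw by blast
qed

lemma cover: assumes i: "i \<in> En n" shows "\<exists>s\<in>S. (s, i) \<in> Rel"
proof -
  have Q: "\<forall>i\<in>En n. \<forall>s\<in>S. (csucc n ^^ b) s = i \<longrightarrow> (\<exists>s'\<in>S. (s', i) \<in> Rel)" for b
  proof (induction b)
    case 0 then show ?case by auto
  next
    case (Suc b)
    show ?case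
    proof (intro ballI impI)
      fix i s assume i: "i \<in> En n" and s: "s \<in> S" and e: "(csucc n ^^ Suc b) s = i"
      show "\<exists>s'\<in>S. (s', i) \<in> Rel"
      proof (cases "i \<in> S")
        case True then show ?thesis by auto
      next
        case False
        define j where "j = (csucc n ^^ b) s"
        have j: "j \<in> En n" "csucc n j = i" using s SEn e by (auto simp: j_def)
        obtain s' where s': "s' \<in> S" "(s', j) \<in> Rel" using Suc.IH j s unfolding j_def by blast
        have "(j, i) \<in> chain_edges n S" using edgeI[OF j(1)] j False by simp
        then have "(s', i) \<in> Rel" using s' by (auto intro: rtrancl_into_rtrancl)
        then show ?thesis using s' by auto
      qed
    qed
  qed
  obtain s where s: "s \<in> S" using S_ne by auto
  have sE: "s \<in> En n" "s \<le> n" using s SEn by (auto simp: En_def)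
  define b where "b = (i + n - s) mod n"
  have "(s + b) mod n = (s + (i + n - s)) mod n" unfolding b_def by (simp add: mod_add_right_eq)
  also have "s + (i + n - s) = i + n" using sE by simp
  finally have "(s + b) mod n = i mod n" by simp
  then have "(csucc n ^^ b) s = i" using csucc_pow[OF sE(1)] cidx_eqI[OF i] by simp
  then show ?thesis using Q[of b] i s by blast
qed

lemma Rel_sym: "(a, b) \<in> Rel \<Longrightarrow> (b, a) \<in> Rel"
proof -
  assume "(a, b) \<in> Rel"
  then have "(b, a) \<in> ((chain_edges n S \<union> (chain_edges n S)\<inverse>)\<inverse>)\<^sup>*"
    by (simp add: rtrancl_converse)
  also have "(chain_edges n S \<union> (chain_edges n S)\<inverse>)\<inverse> = chain_edges n S \<union> (chain_edges n S)\<inverse>" by auto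
  finally show ?thesis .
qed

lemma Rel_class: "(s, i) \<in> Rel \<Longrightarrow> Rel `` {i} = Rel `` {s}"
  using Rel_sym by (auto intro: rtrancl_trans)

lemma inj_fwd: assumes s: "s \<in> S" shows "inj_on (\<lambda>k. (csucc n ^^ k) s) {..dst n S s}"
proof
  have sE: "s \<in> En n" using s SEn by auto
  fix k1 k2 assume k: "k1 \<in> {..dst n S s}" "k2 \<in> {..dst n S s}" and e: "(csucc n ^^ k1) s = (csucc n ^^ k2) s"
  have lt: "k1 < n" "k2 < n" using k dst_lt[OF sE] by auto
  have "(s + k1) mod n = (s + k2) mod n" using e csucc_pow[OF sE] cidx_eq_iff by simp
  then have "k1 mod n = k2 mod n" using cong_add_lcancel_nat[of s k1 k2 n] by (simp add: cong_def)
  then show "k1 = k2" using lt by simp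
qed

lemma prod_comp: assumes s: "s \<in> S" shows "(\<Prod>j\<in>Rel `` {s}. - delta n R j) = pif n R S s"
  unfolding comp_fwd[OF s] pif_def by (subst prod.reindex[OF inj_fwd[OF s]]) simp

lemma parity: assumes X: "finite X" "X \<subseteq> En n"
  shows "(\<Prod>j\<in>X. - delta n R j) = -1 \<longleftrightarrow> even (card (X \<inter> R)) \<noteq> even (card X)"
proof -
  have "(\<Prod>j\<in>X. - delta n R j) = (\<Prod>j\<in>X. if j \<in> R then 1 else -1)"
    using X by (intro prod.cong) (auto simp: delta_En)
  also have "\<dots> = (-1) ^ card (X - R)"
    using X by (simp add: prod.If_cases Diff_eq)
  finally have e: "(\<Prod>j\<in>X. - delta n R j) = (-1) ^ card (X - R)" .
  have c: "card X = card (X \<inter> R) + card (X - R)" using X by (simp add: card_Int_Diff)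
  have m1: "((-1::int) ^ m = -1) \<longleftrightarrow> odd m" for m by (cases "even m") simp_all
  show ?thesis unfolding e c m1 by auto
qed

lemma P_iff: "(\<forall>C\<in>chain_components n S. even (card (C \<inter> R)) \<noteq> even (card C))
   \<longleftrightarrow> (\<forall>s\<in>S. pif n R S s = -1)"
proof
  assume P: "\<forall>C\<in>chain_components n S. even (card (C \<inter> R)) \<noteq> even (card C)"
  show "\<forall>s\<in>S. pif n R S s = -1"
  proof
    fix s assume s: "s \<in> S"
    have sE: "s \<in> En n" using s SEn by auto
    have "Rel `` {s} \<in> chain_components n S" using sE by (auto simp: chain_components_def)
    then have "even (card (Rel `` {s} \<inter> R)) \<noteq> even (card (Rel `` {s}))" using P by blast
    moreover have f: "finite (Rel `` {s})" "Rel `` {s} \<subseteq> En n"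
      using comp_fwd[OF s] sE by auto
    ultimately show "pif n R S s = -1" using parity[OF f] prod_comp[OF s] by simp
  qed
next
  assume P: "\<forall>s\<in>S. pif n R S s = -1"
  show "\<forall>C\<in>chain_components n S. even (card (C \<inter> R)) \<noteq> even (card C)"
  proof
    fix C assume "C \<in> chain_components n S"
    then obtain i where i: "i \<in> En n" "C = Rel `` {i}" by (auto simp: chain_components_def)
    obtain s where s: "s \<in> S" "(s, i) \<in> Rel" using cover[OF i(1)] by auto
    have sE: "s \<in> En n" using s SEn by auto
    have C: "C = Rel `` {s}" using i Rel_class[OF s(2)] by simp
    have f: "finite (Rel `` {s})" "Rel `` {s} \<subseteq> En n"
      using comp_fwd[OF s(1)] sE by auto
    then show "even (card (C \<inter> R)) \<noteq> even (card C)"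
      using parity[OF f] prod_comp[OF s(1)] P s(1) C by simp
  qed
qed

lemma delta_inter: "delta n (T \<inter> En n) i = delta n T i"
  by (simp add: delta_def)

lemma hom_inter: "hom_cone n p S (T \<inter> En n) = hom_cone n p S T"
  by (simp add: hom_cone_def F_def delta_inter)

lemma good_inter: "Good n R S (T \<inter> En n) = Good n R S T"
  by (simp add: Good_def delta_inter)

lemma cone_iff: "hom_cone n p S T = C_pHa n p R S \<longleftrightarrow> Good n R S T"
  using cone_good good_cone by blast

lemma main: "(C_RS n p R S = C_pHa n p R S \<longleftrightarrow>
            (\<exists>T. T \<subseteq> En n \<and> C_pHa n p R S = hom_cone n p S T))
       \<and> ((\<exists>T. T \<subseteq> En n \<and> C_pHa n p R S = hom_cone n p S T) \<longleftrightarrow>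
            (\<forall>C\<in>chain_components n S. even (card (C \<inter> R)) \<noteq> even (card C)))"
proof -
  have ii: "(\<exists>T. T \<subseteq> En n \<and> C_pHa n p R S = hom_cone n p S T) \<longleftrightarrow> (\<exists>T. T \<subseteq> En n \<and> Good n R S T)"
    using cone_iff by metis
  have i_ii: "C_RS n p R S = C_pHa n p R S \<longleftrightarrow> (\<exists>T. T \<subseteq> En n \<and> Good n R S T)"
  proof
    assume "C_RS n p R S = C_pHa n p R S"
    then have "Good n R S (Tprime n R S)" using cone_iff by (simp add: C_RS_def)
    then show "\<exists>T. T \<subseteq> En n \<and> Good n R S T" using good_inter by blast
  next
    assume "\<exists>T. T \<subseteq> En n \<and> Good n R S T"
    then obtain T where T: "T \<subseteq> En n" "Good n R S T" by blast
    have c: "Tprime_cond n R S T" using good_cond T by blast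
    have "Tprime n R S = T" unfolding Tprime_def
      by (rule the_equality) (use cond_unique c in blast)+
    then show "C_RS n p R S = C_pHa n p R S" using T cone_iff by (simp add: C_RS_def)
  qed
  have iii: "(\<exists>T. T \<subseteq> En n \<and> Good n R S T) \<longleftrightarrow> (\<forall>s\<in>S. pif n R S s = -1)"
    using good_pif pif_good Tpi_sub by blast
  show ?thesis using ii i_ii iii P_iff by simp
qed

end

theorem mainTheorem7:
  fixes n p :: nat and R S :: "nat set"
  assumes "n \<ge> 1" and "prime p" and "R \<subseteq> En n" and "S \<subseteq> En n" and "card S \<ge> 2"
  shows "(C_RS n p R S = C_pHa n p R S \<longleftrightarrow>
            (\<exists>T. T \<subseteq> En n \<and> C_pHa n p R S = hom_cone n p S T))
       \<and> ((\<exists>T. T \<subseteq> En n \<and> C_pHa n p R S = hom_cone n p S T) \<longleftrightarrow>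
            (\<forall>C\<in>chain_components n S. even (card (C \<inter> R)) \<noteq> even (card C)))"
proof -
  interpret sset n p R S
    using assms prime_ge_2_nat[OF assms(2)] by unfold_locales auto
  show ?thesis by (rule main)
qed

end
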